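(* Let $F$ be a graph of diameter $2$, $n=|V(F)|$, and let $l>n$ be an integer. Then $z_{i+1}\ge z_i+C_{l-2}^{n-2}$ for every $i\in\{1,2,\dots,l-1\}$.
   Context: All graphs are simple, finite, undirected. The $F$-degree of a vertex $v$ in $G$ is the number of subgraphs of $G$ (not necessarily induced) isomorphic to $F$ and containing $v$. $A_{2l-1}$ is the graph with vertex set $\{1,\dots,2l-1\}$ in which distinct $i,j$ are adjacent iff $|i-j|\le l-1$. $z_i$ denotes the $F$-degree of vertex $i$ in $A_{2l-1}$. $C_m^k=\frac{m!}{k!(m-k)!}$ for integers $m\ge k\ge0$, and $C_m^k=0$ otherwise. *)

theory Defs
  imports Main
begin

definition sgraph :: "'a set \<Rightarrow> 'a set set \<Rightarrow> bool" where
  "sgraph V E \<longleftrightarrow> finite V \<and> (\<forall>e\<in>E. \<exists>x y. x \<noteq> y \<and> x \<in> V \<and> y \<in> V \<and> e = {x, y})"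

definition walk_len :: "'a set \<Rightarrow> 'a set set \<Rightarrow> nat \<Rightarrow> 'a \<Rightarrow> 'a \<Rightarrow> bool" where
  "walk_len V E k x y \<longleftrightarrow> (\<exists>xs. length xs = Suc k \<and> set xs \<subseteq> V \<and> hd xs = x \<and> last xs = y
      \<and> (\<forall>i<k. {xs ! i, xs ! Suc i} \<in> E))"

definition connected_graph :: "'a set \<Rightarrow> 'a set set \<Rightarrow> bool" where
  "connected_graph V E \<longleftrightarrow> (\<forall>x\<in>V. \<forall>y\<in>V. \<exists>k. walk_len V E k x y)"

definition gdist :: "'a set \<Rightarrow> 'a set set \<Rightarrow> 'a \<Rightarrow> 'a \<Rightarrow> nat" where
  "gdist V E x y = (LEAST k. walk_len V E k x y)"

definition diameter :: "'a set \<Rightarrow> 'a set set \<Rightarrow> nat" where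
  "diameter V E = Max {gdist V E x y | x y. x \<in> V \<and> y \<in> V}"

definition has_diameter :: "'a set \<Rightarrow> 'a set set \<Rightarrow> nat \<Rightarrow> bool" where
  "has_diameter V E d \<longleftrightarrow> V \<noteq> {} \<and> connected_graph V E \<and> diameter V E = d"

definition graph_iso :: "'a set \<Rightarrow> 'a set set \<Rightarrow> 'b set \<Rightarrow> 'b set set \<Rightarrow> bool" where
  "graph_iso V1 E1 V2 E2 \<longleftrightarrow> (\<exists>f. bij_betw f V1 V2 \<and>
      (\<forall>x\<in>V1. \<forall>y\<in>V1. {x, y} \<in> E1 \<longleftrightarrow> {f x, f y} \<in> E2))"

text \<open>Subgraphs (not necessarily induced) of G = (V, E) isomorphic to F = (VF, EF).\<close>
definition iso_subgraphs :: "'a set \<Rightarrow> 'a set set \<Rightarrow> 'b set \<Rightarrow> 'b set set \<Rightarrow> ('b set \<times> 'b set set) set" where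
  "iso_subgraphs VF EF V E = {(W, E'). W \<subseteq> V \<and> E' \<subseteq> E \<and> (\<forall>e\<in>E'. e \<subseteq> W) \<and> graph_iso VF EF W E'}"

definition F_degree :: "'a set \<Rightarrow> 'a set set \<Rightarrow> 'b set \<Rightarrow> 'b set set \<Rightarrow> 'b \<Rightarrow> nat" where
  "F_degree VF EF V E v = card {(W, E') \<in> iso_subgraphs VF EF V E. v \<in> W}"

text \<open>The graph A_{2l-1}: vertices 1..2l-1, i ~ j iff i \<noteq> j and |i-j| \<le> l-1.\<close>
definition A_verts :: "nat \<Rightarrow> nat set" where
  "A_verts l = {1..2*l-1}"

definition A_edges :: "nat \<Rightarrow> nat set set" where
  "A_edges l = {{i, j} | i j. i \<in> A_verts l \<and> j \<in> A_verts l \<and> i \<noteq> j \<and> i \<le> j + (l - 1) \<and> j \<le> i + (l - 1)}"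

end

theory Submission
  imports Defs
begin

lemma inE: "{u,v} \<in> A_edges l \<longleftrightarrow> u \<in> A_verts l \<and> v \<in> A_verts l \<and> u \<noteq> v \<and> u \<le> v + (l-1) \<and> v \<le> u + (l-1)"
  unfolding A_edges_def by (auto simp: doubleton_eq_iff)

lemma edgeE: "e \<in> A_edges l \<Longrightarrow> \<exists>u v. e = {u,v} \<and> {u,v} \<in> A_edges l"
  unfolding A_edges_def by blast

lemma finite_S: "finite (iso_subgraphs VF EF (A_verts l) (A_edges l))"
proof -
  have f1: "finite (A_edges l)"
    by (rule finite_subset[of _ "Pow (A_verts l)"]) (auto simp: A_edges_def A_verts_def)
  show ?thesis
    by (rule finite_subset[of _ "Pow (A_verts l) \<times> Pow (A_edges l)"]) (auto simp: iso_subgraphs_def f1 A_verts_def)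
qed

definition swp :: "nat \<Rightarrow> nat \<Rightarrow> nat" where
  "swp i x = (if x = i then Suc i else if x = Suc i then i else x)"

lemma swp_swp[simp]: "swp i (swp i x) = x" by (simp add: swp_def)
lemma inj_swp: "inj (swp i)" by (metis injI swp_swp)
lemma swp_img_img[simp]: "swp i ` swp i ` W = W" by (simp add: image_image)
lemma swp_img_img2[simp]: "image (swp i) ` image (swp i) ` E = E" by (simp add: image_image)
lemma inj_img_swp: "inj (image (swp i))"
  by (metis injI swp_img_img)

lemma swap_sub:
  assumes "1 \<le> i" "i < l" "(W,E') \<in> iso_subgraphs VF EF (A_verts l) (A_edges l)" "i \<in> W" "Suc i \<notin> W"
  shows "(swp i ` W, image (swp i) ` E') \<in> iso_subgraphs VF EF (A_verts l) (A_edges l)"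
proof -
  from assms(3) have W: "W \<subseteq> A_verts l" and E: "E' \<subseteq> A_edges l" and EW: "\<forall>e\<in>E'. e \<subseteq> W"
    and iso: "graph_iso VF EF W E'" by (auto simp: iso_subgraphs_def)
  have 1: "swp i ` W \<subseteq> A_verts l" using W assms(1,2) by (auto simp: swp_def A_verts_def)
  have 2: "image (swp i) ` E' \<subseteq> A_edges l"
  proof
    fix e' assume "e' \<in> image (swp i) ` E'"
    then obtain e where e: "e \<in> E'" "e' = swp i ` e" by blast
    then obtain u v where uv: "e = {u,v}" "{u,v} \<in> A_edges l" using E edgeE by blast
    have "u \<in> W" "v \<in> W" using EW e uv by auto
    then have "u \<noteq> Suc i" "v \<noteq> Suc i" using assms(5) by auto
    then have "{swp i u, swp i v} \<in> A_edges l" using uv(2) assms(1,2)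
      unfolding inE by (auto simp: swp_def A_verts_def)
    then show "e' \<in> A_edges l" using e uv by simp
  qed
  have 3: "\<forall>e\<in>image (swp i) ` E'. e \<subseteq> swp i ` W" using EW by auto
  from iso obtain f where f: "bij_betw f VF W" "\<forall>x\<in>VF. \<forall>y\<in>VF. {x, y} \<in> EF \<longleftrightarrow> {f x, f y} \<in> E'"
    unfolding graph_iso_def by blast
  have "bij_betw (swp i \<circ> f) VF (swp i ` W)"
    using f(1) by (rule bij_betw_trans) (meson bij_betw_imageI inj_swp inj_on_subset subset_UNIV)
  moreover have "\<forall>x\<in>VF. \<forall>y\<in>VF. {x, y} \<in> EF \<longleftrightarrow> {(swp i \<circ> f) x, (swp i \<circ> f) y} \<in> image (swp i) ` E'"
  proof (intro ballI)
    fix x y assume "x \<in> VF" "y \<in> VF"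
    have "{(swp i \<circ> f) x, (swp i \<circ> f) y} = swp i ` {f x, f y}" by simp
    then show "{x, y} \<in> EF \<longleftrightarrow> {(swp i \<circ> f) x, (swp i \<circ> f) y} \<in> image (swp i) ` E'"
      using f(2) \<open>x \<in> VF\<close> \<open>y \<in> VF\<close> inj_image_mem_iff[OF inj_img_swp] by metis
  qed
  ultimately have 4: "graph_iso VF EF (swp i ` W) (image (swp i) ` E')"
    unfolding graph_iso_def by blast
  show ?thesis using 1 2 3 4 by (simp add: iso_subgraphs_def)
qed


lemma exists_copy:
  assumes sg: "sgraph VF EF" and pq: "p \<noteq> q" "{p,q} \<in> EF" "p \<in> VF" "q \<in> VF"
    and il: "1 \<le> i" "i < l" and T: "T \<subseteq> {i+2..i+l-1}" "card T = card VF - 2"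
  shows "\<exists>E'. (insert (Suc i) (insert (i+l) T), E') \<in> iso_subgraphs VF EF (A_verts l) (A_edges l)
               \<and> {Suc i, i+l} \<in> E'"
proof -
  have fin: "finite VF" using sg by (simp add: sgraph_def)
  have finT: "finite T" using T(1) finite_subset by blast
  have "card (VF - {p,q}) = card T" using pq fin T(2) by (simp add: card_Diff_subset)
  then obtain g where g: "bij_betw g (VF - {p,q}) T"
    using finite_same_card_bij fin finT by (meson finite_Diff)
  define W where "W = insert (Suc i) (insert (i+l) T)"
  define f where "f x = (if x = p then Suc i else if x = q then i+l else g x)" for x
  have nT: "Suc i \<notin> T" "i + l \<notin> T" using T(1) il by auto
  have ne: "Suc i \<noteq> i + l" using il by auto
  have gT: "x \<in> VF - {p,q} \<Longrightarrow> g x \<in> T" for x using g bij_betwE by blast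
  have ginj: "inj_on g (VF - {p,q})" using g bij_betw_def by blast
  have img: "f ` VF = W"
  proof -
    have "VF = {p,q} \<union> (VF - {p,q})" using pq by auto
    then have "f ` VF = f ` {p,q} \<union> f ` (VF - {p,q})" by (metis image_Un)
    also have "f ` (VF - {p,q}) = g ` (VF - {p,q})" by (rule image_cong) (auto simp: f_def)
    also have "\<dots> = T" using g by (simp add: bij_betw_def)
    finally show ?thesis using pq by (auto simp: f_def W_def)
  qed
  have inj: "inj_on f VF"
  proof (rule inj_onI)
    fix x y assume xy: "x \<in> VF" "y \<in> VF" "f x = f y"
    have fx: "f x = (if x = p then Suc i else if x = q then i+l else g x)" by (simp add: f_def)
    have fy: "f y = (if y = p then Suc i else if y = q then i+l else g y)" by (simp add: f_def)
    show "x = y"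
    proof (cases "x = p \<or> x = q \<or> y = p \<or> y = q")
      case True
      have "x \<notin> {p,q} \<Longrightarrow> g x \<in> T" using gT xy by blast
      moreover have "y \<notin> {p,q} \<Longrightarrow> g y \<in> T" using gT xy by blast
      ultimately show ?thesis using True xy(3) fx fy nT ne pq(1) by (cases "x = p"; cases "x = q"; cases "y = p"; cases "y = q") auto
    next
      case False
      then have "g x = g y" using xy fx fy by simp
      then show ?thesis using False xy ginj unfolding inj_on_def by blast
    qed
  qed
  have bij: "bij_betw f VF W" using inj img by (simp add: bij_betw_def)
  define E' where "E' = {{f x, f y} | x y. {x,y} \<in> EF}"
  have EFV: "{x,y} \<in> EF \<Longrightarrow> x \<in> VF \<and> y \<in> VF \<and> x \<noteq> y" for x y
  proof -
    assume "{x,y} \<in> EF"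
    then obtain u v where uv: "u \<noteq> v" "u \<in> VF" "v \<in> VF" "{x,y} = {u,v}"
      using sg unfolding sgraph_def by blast
    have "u \<in> {x,y}" "v \<in> {x,y}" "x \<in> {u,v}" "y \<in> {u,v}" using uv(4) by auto
    then show ?thesis using uv by auto
  qed
  have WV: "W \<subseteq> A_verts l" using T(1) il by (force simp: W_def A_verts_def)
  have Wr: "w \<in> W \<Longrightarrow> Suc i \<le> w \<and> w \<le> i + l" for w using T(1) il by (force simp: W_def)
  have 1: "E' \<subseteq> A_edges l"
  proof
    fix e assume "e \<in> E'"
    then obtain x y where e: "e = {f x, f y}" "{x,y} \<in> EF" unfolding E'_def by blast
    then have xy: "x \<in> VF" "y \<in> VF" "x \<noteq> y" using EFV by auto
    then have "f x \<noteq> f y" using inj inj_on_def by metis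
    moreover have "f x \<in> W" "f y \<in> W" using img xy by auto
    ultimately show "e \<in> A_edges l" unfolding e inE using WV Wr[of "f x"] Wr[of "f y"] by auto
  qed
  have 2: "\<forall>e\<in>E'. e \<subseteq> W" unfolding E'_def using img EFV by auto
  have 3: "\<forall>x\<in>VF. \<forall>y\<in>VF. {x, y} \<in> EF \<longleftrightarrow> {f x, f y} \<in> E'"
  proof (intro ballI iffI)
    fix x y assume "x \<in> VF" "y \<in> VF" "{x,y} \<in> EF"
    then show "{f x, f y} \<in> E'" unfolding E'_def by blast
  next
    fix x y assume xy: "x \<in> VF" "y \<in> VF" "{f x, f y} \<in> E'"
    then obtain u v where uv: "{f x, f y} = {f u, f v}" "{u,v} \<in> EF" unfolding E'_def by blast
    then have "u \<in> VF" "v \<in> VF" using EFV by auto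
    then have "{x,y} = {u,v}" using uv(1) xy inj unfolding doubleton_eq_iff inj_on_def by metis
    then show "{x,y} \<in> EF" using uv by simp
  qed
  have "(W, E') \<in> iso_subgraphs VF EF (A_verts l) (A_edges l)"
    using WV 1 2 3 bij unfolding iso_subgraphs_def graph_iso_def by blast
  moreover have "{Suc i, i+l} \<in> E'" unfolding E'_def using pq by (auto simp: f_def)
  ultimately show ?thesis unfolding W_def by blast
qed


lemma has_edge:
  assumes sg: "sgraph VF EF" and d: "has_diameter VF EF 2"
  shows "\<exists>p q. p \<noteq> q \<and> {p,q} \<in> EF \<and> p \<in> VF \<and> q \<in> VF"
proof -
  have fin: "finite VF" using sg by (simp add: sgraph_def)
  define D where "D = {gdist VF EF x y | x y. x \<in> VF \<and> y \<in> VF}"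
  have "D = (\<lambda>(x,y). gdist VF EF x y) ` (VF \<times> VF)" unfolding D_def by auto
  then have fD: "finite D" using fin by simp
  have "D \<noteq> {}" using d unfolding D_def has_diameter_def by auto
  then have "Max D \<in> D" using fD Max_in by blast
  moreover have "Max D = 2" using d unfolding D_def has_diameter_def diameter_def by simp
  ultimately obtain x y where xy: "x \<in> VF" "y \<in> VF" "gdist VF EF x y = 2" unfolding D_def by auto
  have "\<exists>k. walk_len VF EF k x y" using d xy unfolding has_diameter_def connected_graph_def by blast
  then have "walk_len VF EF (LEAST k. walk_len VF EF k x y) x y" by (rule LeastI_ex)
  then have "walk_len VF EF 2 x y" using xy(3) unfolding gdist_def by simp
  then obtain xs where xsE: "{xs ! 0, xs ! Suc 0} \<in> EF" unfolding walk_len_def by force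
  then obtain u v where "u \<noteq> v" "u \<in> VF" "v \<in> VF" "{xs ! 0, xs ! Suc 0} = {u,v}"
    using sg unfolding sgraph_def by blast
  then show ?thesis using xsE by metis
qed


theorem lemma2:
  fixes VF :: "'a set" and EF :: "'a set set" and l :: nat
  assumes "sgraph VF EF"
    and "has_diameter VF EF 2"
    and "l > card VF"
  shows "\<forall>i\<in>{1..l-1}. F_degree VF EF (A_verts l) (A_edges l) (i + 1)
           \<ge> F_degree VF EF (A_verts l) (A_edges l) i + ((l - 2) choose (card VF - 2))"
proof
  fix i assume "i \<in> {1..l-1}"
  then have il: "1 \<le> i" "i < l" by auto
  obtain p q where pq: "p \<noteq> q" "{p,q} \<in> EF" "p \<in> VF" "q \<in> VF" using has_edge assms(1,2) by blast
  define S where "S = iso_subgraphs VF EF (A_verts l) (A_edges l)"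
  define Pa where "Pa = {(W, E') \<in> S. i \<in> W}"
  define Pb where "Pb = {(W, E') \<in> S. Suc i \<in> W}"
  have fS: "finite S" unfolding S_def by (rule finite_S)
  have fPb: "finite Pb" unfolding Pb_def using fS by (simp add: case_prod_unfold)
  have fPa: "finite Pa" unfolding Pa_def using fS by (simp add: case_prod_unfold)
  define phi where "phi x = (swp i ` fst x, image (swp i) ` snd x)" for x :: "nat set \<times> nat set set"
  define g where "g x = (if Suc i \<in> fst x then x else phi x)" for x
  have phiphi: "phi (phi x) = x" for x unfolding phi_def by simp
  have sPa: "i \<in> swp i ` W" if "Suc i \<in> W" for W using that by (force simp: swp_def)
  have ginj: "inj_on g Pa"
  proof (rule inj_onI)
    fix x y assume xy: "x \<in> Pa" "y \<in> Pa" "g x = g y"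
    have ax: "i \<in> fst x" "i \<in> fst y" using xy unfolding Pa_def by auto
    have nb: "i \<notin> fst (phi z)" if "Suc i \<notin> fst z" for z
      using that unfolding phi_def by (auto simp: swp_def)
    show "x = y"
    proof (cases "Suc i \<in> fst x")
      case True
      show ?thesis
      proof (cases "Suc i \<in> fst y")
        case True
        then show ?thesis using xy \<open>Suc i \<in> fst x\<close> by (simp add: g_def)
      next
        case False
        then have "g y = phi y" by (simp add: g_def)
        then show ?thesis using xy \<open>Suc i \<in> fst x\<close> nb[OF False] ax by (simp add: g_def)
      qed
    next
      case False
      show ?thesis
      proof (cases "Suc i \<in> fst y")
        case True
        then have "g x = phi x" using False by (simp add: g_def)
        then show ?thesis using xy True nb[OF False] ax by (simp add: g_def)
      next
        case False
        then have "phi x = phi y" using xy \<open>Suc i \<notin> fst x\<close> by (simp add: g_def)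
        then show ?thesis by (metis phiphi)
      qed
    qed
  qed
  have gPb: "g ` Pa \<subseteq> Pb"
  proof
    fix z assume "z \<in> g ` Pa"
    then obtain x where x: "x \<in> Pa" "z = g x" by blast
    obtain W E' where WE: "x = (W, E')" by fastforce
    have xS: "(W, E') \<in> S" "i \<in> W" using x WE unfolding Pa_def by auto
    show "z \<in> Pb"
    proof (cases "Suc i \<in> W")
      case True
      then show ?thesis using x WE xS unfolding Pb_def g_def by auto
    next
      case False
      have "(swp i ` W, image (swp i) ` E') \<in> S"
        using swap_sub[OF il xS(1)[unfolded S_def] xS(2) False] unfolding S_def .
      moreover have "Suc i \<in> swp i ` W" using xS(2) by (force simp: swp_def)
      ultimately show ?thesis using x WE False unfolding Pb_def g_def phi_def by auto
    qed
  qed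
  define M where "M = {i+2..i+l-1}"
  define TT where "TT = {T. T \<subseteq> M \<and> card T = card VF - 2}"
  define WT where "WT T = insert (Suc i) (insert (i+l) T)" for T
  define h where "h T = (WT T, SOME E'. (WT T, E') \<in> S \<and> {Suc i, i+l} \<in> E')" for T
  have hT: "h T \<in> S \<and> {Suc i, i+l} \<in> snd (h T)" if "T \<in> TT" for T
  proof -
    have "\<exists>E'. (WT T, E') \<in> S \<and> {Suc i, i+l} \<in> E'"
      using exists_copy[OF assms(1) pq il, of T] that unfolding TT_def M_def WT_def S_def by simp
    then show ?thesis unfolding h_def by (metis (mono_tags, lifting) someI_ex snd_conv)
  qed
  have hinj: "inj_on h TT"
  proof (rule inj_onI)
    fix T1 T2 assume "T1 \<in> TT" "T2 \<in> TT" "h T1 = h T2"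
    then have "WT T1 = WT T2" "T1 \<subseteq> M" "T2 \<subseteq> M" unfolding h_def TT_def by auto
    moreover have "Suc i \<notin> M" "i + l \<notin> M" using il unfolding M_def by auto
    moreover have "T = WT T - {Suc i, i+l}" if "T \<subseteq> M" for T
      using that \<open>Suc i \<notin> M\<close> \<open>i + l \<notin> M\<close> unfolding WT_def by auto
    ultimately show "T1 = T2" by metis
  qed
  have hPb: "h ` TT \<subseteq> Pb"
  proof
    fix z assume "z \<in> h ` TT"
    then obtain T where T: "T \<in> TT" "z = h T" by blast
    have "fst (h T) = WT T" unfolding h_def by simp
    then have "Suc i \<in> fst (h T)" unfolding WT_def by simp
    moreover have "h T \<in> S" using hT[OF T(1)] by simp
    ultimately show "z \<in> Pb" unfolding Pb_def T(2) by (cases "h T") auto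
  qed
  have disj: "g ` Pa \<inter> h ` TT = {}"
  proof (rule ccontr)
    assume "g ` Pa \<inter> h ` TT \<noteq> {}"
    then obtain x T where x: "x \<in> Pa" "T \<in> TT" "g x = h T" by blast
    have iM: "i \<notin> WT T" using x(2) il unfolding TT_def M_def WT_def by auto
    obtain W E' where WE: "x = (W, E')" by fastforce
    have xS: "(W, E') \<in> S" "i \<in> W" using x WE unfolding Pa_def by auto
    show False
    proof (cases "Suc i \<in> W")
      case True
      then have "g x = x" using WE by (simp add: g_def)
      then have "fst (h T) = W" using x(3) WE by (metis fst_conv)
      then show False using iM xS(2) unfolding h_def by simp
    next
      case False
      then have "g x = phi x" using WE by (simp add: g_def)
      then have "snd (h T) = image (swp i) ` E'" using x(3) WE by (metis phi_def snd_conv)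
      then have "{Suc i, i+l} \<in> image (swp i) ` E'" using hT[OF x(2)] by simp
      then obtain e where e: "e \<in> E'" "{Suc i, i+l} = swp i ` e" by blast
      have "swp i ` {Suc i, i+l} = e" using e(2) by (metis swp_img_img)
      moreover have "swp i ` {Suc i, i+l} = {i, i+l}" using il by (auto simp: swp_def)
      moreover have "E' \<subseteq> A_edges l" using xS unfolding S_def iso_subgraphs_def by auto
      ultimately have "{i, i+l} \<in> A_edges l" using e by auto
      then show False unfolding inE using il by auto
    qed
  qed
  have cardTT: "card TT = (l - 2) choose (card VF - 2)"
  proof -
    have "card M = l - 2" unfolding M_def using il by simp
    then show ?thesis unfolding TT_def using n_subsets[of M "card VF - 2"] unfolding M_def by simp
  qed
  have "card Pa + card TT = card (g ` Pa) + card (h ` TT)"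
    using ginj hinj by (simp add: card_image)
  also have "\<dots> = card (g ` Pa \<union> h ` TT)"
    using disj fPa finite_subset[OF hPb fPb] by (simp add: card_Un_disjoint)
  also have "\<dots> \<le> card Pb" using gPb hPb fPb by (simp add: card_mono)
  finally have "card Pa + card TT \<le> card Pb" .
  then show "F_degree VF EF (A_verts l) (A_edges l) (i + 1)
           \<ge> F_degree VF EF (A_verts l) (A_edges l) i + ((l - 2) choose (card VF - 2))"
    unfolding F_degree_def cardTT[symmetric] Pa_def Pb_def S_def by simp
qed

end
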